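(* Fix device $n$, a slot $t$ in frame $k$ with freezing percentage $\gamma_n^k\in[0,1]$, control parameter $V\ge0$, queue value $Q_n^{kT}>0$ and observed channel gain $h_n^t>0$, and assume $\tau_n^{\mathrm{cmp},t}<\tau_0$. Consider the per-slot problem $\min_{0\le p_n^t\le\overline{P}_n}\ VX_n^t+Q_n^{kT}E_n^t$. An optimal transmit power is $$p_n^{t,*}=\begin{cases}p_{n,\min}^t,&\text{if }p_{n,\min}^t\le p_{n,\max}^k,\\0,&\text{otherwise,}\end{cases}$$ where $$p_{n,\min}^t=\frac{N_0}{h_n^t}\Big(2^{\frac{(1-\gamma_n^k)S}{W(\tau_0-\tau_n^{\mathrm{cmp},t})}}-1\Big),\qquad p_{n,\max}^k=\Big[\frac{(VB_n\lambda-e_n^{\mathrm{cmp}}Q_n^{kT})(1-\gamma_n^k)}{Q_n^{kT}(\tau_0-\tau_n^{\mathrm{cmp},k})}\Big]_0^{\overline{P}_n},$$ with $[x]_a^b=\min\{\max\{x,a\},b\}$, $e_n^{\mathrm{cmp}}=\frac{\alpha_nc_nB_nf_n^2}{2}$, and $\tau_n^{\mathrm{cmp},k}=\tau_n^{\mathrm{cmp},t}$ the (frame-constant) computation latency.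
   Context: Device $n$ with $B_n$ training samples, CPU frequency $f_n$, $c_n$ cycles per sample and effective capacitance $\alpha_n$ trains with a fraction $\gamma_n^k$ of its parameters frozen: computation latency $\tau_n^{\mathrm{cmp},t}=(1-\gamma_n^k)c_nB_n/f_n$ and computation energy $E_n^{\mathrm{cmp},t}=\frac{\alpha_n}{2}(1-\gamma_n^k)c_nB_nf_n^2$. With transmit power $p$, bandwidth $W$, noise power $N_0$, channel gain $h_n^t$, the rate is $r=W\log_2(1+ph_n^t/N_0)$, upload latency $\tau_n^{\mathrm{com},t}=(1-\gamma_n^k)S/r$ and communication energy $E_n^{\mathrm{com},t}=p(1-\gamma_n^k)S/r$, where $S$ is the full gradient size in bits. The upload succeeds ($\mathbb{1}_n^t=1$) iff $\tau_n^{\mathrm{cmp},t}+\tau_n^{\mathrm{com},t}\le\tau_0$ for a per-round latency $\tau_0$; $\overline{P}_n$ is the peak power. The penalty is $X_n^t=\lambda\mathbb{1}_n^tB_n(\gamma_n^k-1)$ with constant $\lambda>0$. For $p>0$ the energy is $E_n^t=E_n^{\mathrm{cmp},t}+E_n^{\mathrm{com},t}$; choosing $p=0$ means the device drops out of training in this slot, so $\mathbb{1}_n^t=0$, $X_n^t=0$ and $E_n^t=0$. *)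

theory Defs
  imports Complex_Main
begin

definition clip :: "real \<Rightarrow> real \<Rightarrow> real \<Rightarrow> real" where
  "clip a b x = min (max x a) b"

definition rate :: "real \<Rightarrow> real \<Rightarrow> real \<Rightarrow> real \<Rightarrow> real" where
  "rate W N0 h p = W * log 2 (1 + p * h / N0)"

definition tau_cmp :: "real \<Rightarrow> real \<Rightarrow> real \<Rightarrow> real \<Rightarrow> real" where
  "tau_cmp gamma c B f = (1 - gamma) * c * B / f"

definition E_cmp :: "real \<Rightarrow> real \<Rightarrow> real \<Rightarrow> real \<Rightarrow> real \<Rightarrow> real" where
  "E_cmp alpha gamma c B f = alpha / 2 * (1 - gamma) * c * B * f ^ 2"

definition tau_com :: "real \<Rightarrow> real \<Rightarrow> real \<Rightarrow> real" where
  "tau_com gamma S r = (1 - gamma) * S / r"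

definition E_com :: "real \<Rightarrow> real \<Rightarrow> real \<Rightarrow> real \<Rightarrow> real" where
  "E_com p gamma S r = p * (1 - gamma) * S / r"

text \<open>Per-slot objective V X + Q E as a function of the transmit power p.
  For p = 0 the device drops out: indicator 0, X = 0, E = 0.
  For p > 0 the upload succeeds iff tau_cmp + tau_com \<le> tau0,
  X = lambda * indicator * B * (gamma - 1), E = E_cmp + E_com.\<close>
definition slot_cost ::
  "real \<Rightarrow> real \<Rightarrow> real \<Rightarrow> real \<Rightarrow> real \<Rightarrow> real \<Rightarrow> real \<Rightarrow> real \<Rightarrow> real \<Rightarrow> real
   \<Rightarrow> real \<Rightarrow> real \<Rightarrow> real \<Rightarrow> real \<Rightarrow> real" where
  "slot_cost V Q lambda B c f alpha S W N0 h tau0 gamma p =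
     (if p = 0 then 0 else
      (let r = rate W N0 h p;
           ind = (if tau_cmp gamma c B f + tau_com gamma S r \<le> tau0 then (1::real) else 0);
           X = lambda * ind * B * (gamma - 1);
           E = E_cmp alpha gamma c B f + E_com p gamma S r
       in V * X + Q * E))"

definition p_min :: "real \<Rightarrow> real \<Rightarrow> real \<Rightarrow> real \<Rightarrow> real \<Rightarrow> real \<Rightarrow> real \<Rightarrow> real \<Rightarrow> real \<Rightarrow> real" where
  "p_min B c f S W N0 h tau0 gamma =
     N0 / h * (2 powr ((1 - gamma) * S / (W * (tau0 - tau_cmp gamma c B f))) - 1)"

definition e_cmp :: "real \<Rightarrow> real \<Rightarrow> real \<Rightarrow> real \<Rightarrow> real" where
  "e_cmp alpha c B f = alpha * c * B * f ^ 2 / 2"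

definition p_max :: "real \<Rightarrow> real \<Rightarrow> real \<Rightarrow> real \<Rightarrow> real \<Rightarrow> real \<Rightarrow> real \<Rightarrow> real \<Rightarrow> real \<Rightarrow> real \<Rightarrow> real" where
  "p_max V Q lambda B c f alpha tau0 Pbar gamma =
     clip 0 Pbar ((V * B * lambda - e_cmp alpha c B f * Q) * (1 - gamma)
                  / (Q * (tau0 - tau_cmp gamma c B f)))"

end

theory Submission
  imports Defs "HOL-Analysis.Analysis"
begin

lemma ln_ratio_mono:
  fixes a p q :: real
  assumes "a > 0" "0 < q" "q \<le> p"
  shows "q * ln (1 + a * p) \<le> p * ln (1 + a * q)"
proof -
  define t where "t = q / p"
  have p: "p > 0" using assms by linarith
  have t0: "0 \<le> t" "t \<le> 1" using assms p by (auto simp: t_def)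
  have H: "(1 - t) * ln 1 + t * ln (1 + a * p) \<le> ln ((1 - t) *\<^sub>R 1 + t *\<^sub>R (1 + a * p))"
  proof (rule concave_onD[OF ln_concave t0])
    show "(1::real) \<in> {0<..}" by simp
    have "0 \<le> a * p" using assms p by simp
    thus "1 + a * p \<in> {0<..}" by simp
  qed
  moreover have eq: "(1 - t) *\<^sub>R 1 + t *\<^sub>R (1 + a * p) = 1 + a * q"
    using p by (simp add: t_def field_simps)
  ultimately have "t * ln (1 + a * p) \<le> ln (1 + a * q)" using H[unfolded eq] by simp
  hence "p * (t * ln (1 + a * p)) \<le> p * ln (1 + a * q)"
    using p by (simp add: mult_left_mono)
  thus ?thesis using p by (simp add: t_def)
qed

theorem proposition1:
  fixes V Q lambda B c f alpha S W N0 h tau0 Pbar gamma :: real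
  assumes B_pos: "B > 0" and c_pos: "c > 0" and f_pos: "f > 0" and alpha_pos: "alpha > 0"
    and S_pos: "S > 0" and W_pos: "W > 0" and N0_pos: "N0 > 0" and lambda_pos: "lambda > 0"
    and tau0_pos: "tau0 > 0" and Pbar_pos: "Pbar > 0"
    and gamma: "0 \<le> gamma" "gamma \<le> 1"
    and V: "V \<ge> 0" and Q: "Q > 0" and h: "h > 0"
    and lat: "tau_cmp gamma c B f < tau0"
  shows "let pmin = p_min B c f S W N0 h tau0 gamma;
             pmax = p_max V Q lambda B c f alpha tau0 Pbar gamma;
             pstar = (if pmin \<le> pmax then pmin else 0)
         in 0 \<le> pstar \<and> pstar \<le> Pbar \<and>
            (\<forall>p. 0 \<le> p \<and> p \<le> Pbar \<longrightarrow>
               slot_cost V Q lambda B c f alpha S W N0 h tau0 gamma pstar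
                 \<le> slot_cost V Q lambda B c f alpha S W N0 h tau0 gamma p)"
proof -
  define g where "g = 1 - gamma"
  define tc where "tc = tau_cmp gamma c B f"
  define D where "D = tau0 - tc"
  define y where "y = g * S / (W * D)"
  define e where "e = e_cmp alpha c B f"
  define pm where "pm = p_min B c f S W N0 h tau0 gamma"
  define pM where "pM = p_max V Q lambda B c f alpha tau0 Pbar gamma"
  define x where "x = (V * B * lambda - e * Q) * g / (Q * D)"
  define C where "C = slot_cost V Q lambda B c f alpha S W N0 h tau0 gamma"
  define r where "r = (\<lambda>p. rate W N0 h p)"
  have D: "D > 0" using lat by (simp add: D_def tc_def)
  have g: "0 \<le> g" "g \<le> 1" using gamma by (auto simp: g_def)
  have e0: "e \<ge> 0" using alpha_pos c_pos B_pos by (simp add: e_def e_cmp_def)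
  have pm_eq: "pm = N0 / h * (2 powr y - 1)"
    by (simp add: pm_def p_min_def y_def g_def D_def tc_def)
  have pM_eq: "pM = min (max x 0) Pbar"
    by (simp add: pM_def p_max_def clip_def x_def e_def g_def D_def tc_def)
  have y0: "y \<ge> 0" using g S_pos W_pos D by (simp add: y_def)
  have "1 \<le> 2 powr y" using y0 by (simp add: ge_one_powr_ge_zero)
  hence pm0: "pm \<ge> 0" using pm_eq N0_pos h by simp
  have rpos: "r p > 0" if "p > 0" for p
  proof -
    have "1 < 1 + p * h / N0" using that h N0_pos by simp
    thus ?thesis using W_pos by (simp add: r_def rate_def)
  qed
  have C0: "C 0 = 0" by (simp add: C_def slot_cost_def)
  have Cp: "C p = V * (lambda * (if tc + g * S / r p \<le> tau0 then 1 else 0) * B * (gamma - 1))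
       + Q * (e * g + p * g * S / r p)" if "p > 0" for p
    using that by (simp add: C_def slot_cost_def r_def tc_def tau_com_def E_cmp_def E_com_def
        e_def e_cmp_def g_def Let_def algebra_simps)
  have fail_nonneg: "C p \<ge> 0" if "p > 0" "\<not> (tc + g * S / r p \<le> tau0)" for p
  proof -
    have "p * g * S / r p \<ge> 0" using that rpos[OF that(1)] g S_pos by simp
    hence "Q * (e * g + p * g * S / r p) \<ge> 0" using Q e0 g by simp
    thus ?thesis using Cp[OF that(1)] that(2) by simp
  qed
  show ?thesis
  proof (cases "g = 0")
    case True
    have "pm = 0" using pm_eq True by (simp add: y_def)
    moreover have "pM = 0" using pM_eq True Pbar_pos by (simp add: x_def)
    moreover have "C p \<ge> 0" if "p \<ge> 0" for p
    proof (cases "p = 0")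
      case True thus ?thesis using C0 by simp
    next
      case False
      hence "C p = 0" using Cp[of p] that True by (simp add: g_def)
      thus ?thesis by simp
    qed
    ultimately show ?thesis using C0 Pbar_pos
      by (simp add: C_def pm_def pM_def Let_def)
  next
    case False
    hence gpos: "g > 0" using g by simp
    have ypos: "y > 0" using gpos S_pos W_pos D by (simp add: y_def)
    have "2 powr 0 < 2 powr y" using ypos by (intro powr_less_mono) auto
    hence pmpos: "pm > 0" using pm_eq N0_pos h by simp
    have succ_iff: "(tc + g * S / r p \<le> tau0) \<longleftrightarrow> pm \<le> p" if "p > 0" for p
    proof -
      have rp: "r p > 0" using rpos[OF that] .
      have "(tc + g * S / r p \<le> tau0) \<longleftrightarrow> g * S / r p \<le> D" unfolding D_def by linarith
      also have "\<dots> \<longleftrightarrow> g * S \<le> D * r p" using rp by (simp add: divide_le_eq mult.commute)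
      also have "\<dots> \<longleftrightarrow> y \<le> log 2 (1 + p * h / N0)"
        using D W_pos by (simp add: y_def r_def rate_def divide_le_eq field_simps)
      also have "\<dots> \<longleftrightarrow> 2 powr y \<le> 1 + p * h / N0"
        by (rule le_log_iff) (use that h N0_pos in \<open>auto intro: add_pos_nonneg\<close>)
      also have "\<dots> \<longleftrightarrow> pm \<le> p"
        using h N0_pos by (simp add: pm_eq field_simps)
      finally show ?thesis .
    qed
    have r_pm: "r pm = g * S / D"
    proof -
      have "1 + pm * h / N0 = 2 powr y" using pm_eq h N0_pos by simp
      hence "r pm = W * y" by (simp add: r_def rate_def)
      thus ?thesis using W_pos by (simp add: y_def)
    qed
    have C_pm: "C pm = - V * lambda * B * g + Q * (e * g + pm * D)"
    proof -
      have "tc + g * S / r pm \<le> tau0" using succ_iff[OF pmpos] by simp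
      moreover have "pm * g * S / r pm = pm * D" using r_pm gpos S_pos D by simp
      ultimately show ?thesis using Cp[OF pmpos] by (simp add: g_def algebra_simps)
    qed
    have C_pm_le: "C pm \<le> 0 \<longleftrightarrow> pm \<le> x"
    proof -
      have "C pm = pm * (Q * D) - (V * B * lambda - e * Q) * g"
        using C_pm by (simp add: algebra_simps)
      hence "C pm \<le> 0 \<longleftrightarrow> pm * (Q * D) \<le> (V * B * lambda - e * Q) * g"
        by linarith
      also have "\<dots> \<longleftrightarrow> pm \<le> x" using Q D by (simp add: x_def le_divide_eq)
      finally show ?thesis .
    qed
    have succ_ge: "C p \<ge> C pm" if "p \<ge> pm" for p
    proof -
      have pp: "p > 0" using that pmpos by simp
      have "pm * ln (1 + h / N0 * p) \<le> p * ln (1 + h / N0 * pm)"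
        by (rule ln_ratio_mono) (use h N0_pos pmpos that in auto)
      moreover have "h / N0 * p = p * h / N0" "h / N0 * pm = pm * h / N0" by simp_all
      ultimately have L: "pm * ln (1 + p * h / N0) \<le> p * ln (1 + pm * h / N0)" by (simp add: mult.commute)
      have k0: "W / ln 2 \<ge> 0" using W_pos by simp
      have rr: "r q = (W / ln 2) * ln (1 + q * h / N0)" for q
        by (simp add: r_def rate_def log_def)
      have "pm * r p = (W / ln 2) * (pm * ln (1 + p * h / N0))" by (simp add: rr)
      also have "\<dots> \<le> (W / ln 2) * (p * ln (1 + pm * h / N0))" by (rule mult_left_mono[OF L k0])
      also have "\<dots> = p * r pm" by (simp add: rr)
      finally have "pm * r p \<le> p * r pm" .
      hence R: "pm / r pm \<le> p / r p"
        using rpos[OF pp] rpos[OF pmpos] by (simp add: divide_le_eq le_divide_eq mult.commute)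
      have gs: "g * S \<ge> 0" using gpos S_pos by simp
      have "pm * g * S / r pm = (g * S) * (pm / r pm)" by simp
      also have "\<dots> \<le> (g * S) * (p / r p)" by (rule mult_left_mono[OF R gs])
      also have "\<dots> = p * g * S / r p" by simp
      finally have "pm * g * S / r pm \<le> p * g * S / r p" .
      hence "Q * (e * g + pm * g * S / r pm) \<le> Q * (e * g + p * g * S / r p)" using Q by simp
      thus ?thesis using Cp[OF pp] Cp[OF pmpos] succ_iff[OF pp] succ_iff[OF pmpos] that by simp
    qed
    have main: "C (if pm \<le> pM then pm else 0) \<le> C p" if "0 \<le> p" "p \<le> Pbar" for p
    proof (cases "pm \<le> pM")
      case True
      hence le: "pm \<le> x" using pM_eq pmpos by (simp add: min_def max_def split: if_splits)
      hence cpm: "C pm \<le> 0" using C_pm_le by simp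
      show ?thesis
      proof (cases "p = 0")
        case True thus ?thesis using C0 cpm \<open>pm \<le> pM\<close> by simp
      next
        case False
        hence pp: "p > 0" using that by simp
        show ?thesis
        proof (cases "pm \<le> p")
          case True thus ?thesis using succ_ge \<open>pm \<le> pM\<close> by simp
        next
          case False thus ?thesis using fail_nonneg[OF pp] succ_iff[OF pp] cpm \<open>pm \<le> pM\<close> by simp
        qed
      qed
    next
      case nle: False
      show ?thesis
      proof (cases "p = 0")
        case True thus ?thesis using nle by simp
      next
        case False
        hence pp: "p > 0" using that by simp
        show ?thesis
        proof (cases "pm \<le> p")
          case True
          hence "pm \<le> Pbar" using that by simp
          hence "pm > x" using nle pM_eq by (simp add: min_def max_def split: if_splits)
          hence "C pm > 0" using C_pm_le by simp
          thus ?thesis using succ_ge[OF True] nle C0 by simp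
        next
          case False thus ?thesis using fail_nonneg[OF pp] succ_iff[OF pp] nle C0 by simp
        qed
      qed
    qed
    have "pm \<le> pM \<Longrightarrow> pm \<le> Pbar" using pM_eq by simp
    then show ?thesis using main pm0 Pbar_pos
      unfolding Let_def pm_def[symmetric] pM_def[symmetric] C_def[symmetric] by auto
  qed
qed

end
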